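(* If $X$ and $Y$ are homotopy equivalent spaces, then the subspaces $\mathbf{w}(X)$ and $\mathbf{w}(Y)$ are homotopy equivalent, and the subspaces $\mathbf{aw}(X)$ and $\mathbf{aw}(Y)$ are homotopy equivalent.
   Context: A loop is trivial if path-homotopic to a constant loop. A sequence of loops $\alpha_n$ based at $x$ is a null-sequence if every neighborhood of $x$ contains $\alpha_n([0,1])$ for all but finitely many $n$. $\mathbf{aw}(X)=\{x\in X\mid \text{there is a null-sequence of non-trivial loops based at }x\}$ (with subspace topology). $\mathbf{w}(X)$ is the subspace of points $x$ at which $X$ is not semilocally simply connected, i.e. every neighborhood of $x$ contains a loop based at $x$ that is non-trivial in $X$. *)

theory Defs
  imports "HOL-Analysis.Analysis"
begin

definition loop_at :: "'a topology \<Rightarrow> 'a \<Rightarrow> (real \<Rightarrow> 'a) \<Rightarrow> bool" where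
  "loop_at X x g \<longleftrightarrow> pathin X g \<and> g 0 = x \<and> g 1 = x"

definition trivial_loop :: "'a topology \<Rightarrow> 'a \<Rightarrow> (real \<Rightarrow> 'a) \<Rightarrow> bool" where
  "trivial_loop X x g \<longleftrightarrow>
     homotopic_with (\<lambda>h. h 0 = x \<and> h 1 = x) (subtopology euclideanreal {0..1}) X g (\<lambda>t. x)"

text \<open>w(X): points at which X is not semilocally simply connected.\<close>
definition wild_set :: "'a topology \<Rightarrow> 'a set" where
  "wild_set X = {x \<in> topspace X. \<forall>U. openin X U \<and> x \<in> U \<longrightarrow>
      (\<exists>g. loop_at X x g \<and> g ` {0..1} \<subseteq> U \<and> \<not> trivial_loop X x g)}"

definition awild_set :: "'a topology \<Rightarrow> 'a set" where
  "awild_set X = {x \<in> topspace X. \<exists>\<alpha> :: nat \<Rightarrow> real \<Rightarrow> 'a.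
      (\<forall>n. loop_at X x (\<alpha> n) \<and> \<not> trivial_loop X x (\<alpha> n)) \<and>
      (\<forall>U. openin X U \<and> x \<in> U \<longrightarrow> (\<forall>\<^sub>F n in sequentially. \<alpha> n ` {0..1} \<subseteq> U))}"

end

theory Submission
  imports Defs
begin

lemma lemA:
  fixes H :: "real \<times> 'a \<Rightarrow> 'a" and \<alpha> :: "real \<Rightarrow> 'a"
  assumes H: "continuous_map (prod_topology (top_of_set {0..1}) X) X H"
    and H1: "\<And>z. H(1,z) = z"
    and \<alpha>: "pathin X \<alpha>" "\<alpha> 0 = x" "\<alpha> 1 = x"
    and K: "homotopic_with (\<lambda>h. h 0 = H(0,x) \<and> h 1 = H(0,x)) (top_of_set {0..1}) X
             (\<lambda>s. H(0, \<alpha> s)) (\<lambda>s. H(0,x))"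
  shows "trivial_loop X x \<alpha>"
proof -
  obtain K :: "real \<times> real \<Rightarrow> 'a" where Kc: "continuous_map (top_of_set ({0..1} \<times> {0..1})) X K"
    and K0: "\<And>s. K(0,s) = H(0,\<alpha> s)" and K1: "\<And>s. K(1,s) = H(0,x)"
    and Ke: "\<And>u. u \<in> {0..1} \<Longrightarrow> K(u,0) = H(0,x) \<and> K(u,1) = H(0,x)"
    using K unfolding homotopic_with_def prod_topology_subtopology_eu by blast
  define D :: "(real \<times> real) set" where "D = {0..1} \<times> {-1..1}"
  define \<Psi> where "\<Psi> = (\<lambda>y::real\<times>real. if 0 \<le> snd y then H(snd y, \<alpha> (fst y)) else K(- snd y, fst y))"
  define P where "P = (\<lambda>y::real\<times>real. H(max 0 (snd y), x))"
  have xX: "x \<in> topspace X" using \<alpha> path_start_in_topspace by metis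
  have \<alpha>c: "continuous_map (top_of_set {0..1}) X \<alpha>" using \<alpha> by (simp add: pathin_def)
  have c1: "continuous_map (subtopology (top_of_set D) {y \<in> topspace (top_of_set D). 0 \<le> snd y}) X
      (\<lambda>y. H(snd y, \<alpha> (fst y)))"
  proof -
    have "continuous_map (subtopology (top_of_set D) {y \<in> topspace (top_of_set D). 0 \<le> snd y})
           (prod_topology (top_of_set {0..1}) X) (\<lambda>y. (snd y, \<alpha> (fst y)))"
    proof (rule continuous_map_pairedI)
      show "continuous_map (subtopology (top_of_set D) {y \<in> topspace (top_of_set D). 0 \<le> snd y})
          (top_of_set {0..1}) snd"
        by (auto simp: D_def continuous_map_in_subtopology subtopology_subtopology
            intro!: continuous_on_snd continuous_on_id)
      have "continuous_map (subtopology (top_of_set D) {y \<in> topspace (top_of_set D). 0 \<le> snd y})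
          (top_of_set {0..1}) fst"
        by (auto simp: D_def continuous_map_in_subtopology subtopology_subtopology
            intro!: continuous_on_fst continuous_on_id)
      then show "continuous_map (subtopology (top_of_set D) {y \<in> topspace (top_of_set D). 0 \<le> snd y}) X
          (\<lambda>y. \<alpha> (fst y))"
        using continuous_map_compose[OF _ \<alpha>c] by (simp add: o_def)
    qed
    then show ?thesis using continuous_map_compose[OF _ H] by (simp add: o_def)
  qed
  have c2: "continuous_map (subtopology (top_of_set D) {y \<in> topspace (top_of_set D). snd y \<le> 0}) X
      (\<lambda>y. K(- snd y, fst y))"
  proof -
    have "continuous_map (subtopology (top_of_set D) {y \<in> topspace (top_of_set D). snd y \<le> 0})
           (top_of_set ({0..1} \<times> {0..1})) (\<lambda>y. (- snd y, fst y))"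
      by (auto simp: D_def continuous_map_in_subtopology subtopology_subtopology
            intro!: continuous_map_from_subtopology continuous_intros)
    then show ?thesis using continuous_map_compose[OF _ Kc] by (simp add: o_def)
  qed
  have \<Psi>c: "continuous_map (top_of_set D) X \<Psi>"
    unfolding \<Psi>_def
    by (rule continuous_map_cases_le[OF _ _ c1 c2]) (auto simp: K0 intro: continuous_intros)
  define \<sigma> :: "real \<Rightarrow> real \<times> real" where "\<sigma> = (\<lambda>s. (min 1 (max 0 (3 * s - 1)), max (-1) (\<bar>6 * s - 3\<bar> - 2)))"
  define tp where "tp = (\<lambda>s::real. (s, 1::real))"
  have cvx: "convex D" unfolding D_def by (intro convex_Times convex_real_interval)
  have hp: "homotopic_paths D tp \<sigma>"
  proof (rule homotopic_paths_linear)
    show "path tp" unfolding tp_def path_def by (intro continuous_intros)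
    show "path \<sigma>" unfolding \<sigma>_def path_def by (intro continuous_intros)
    show "pathstart \<sigma> = pathstart tp" "pathfinish \<sigma> = pathfinish tp"
      by (auto simp: \<sigma>_def tp_def pathstart_def pathfinish_def)
    fix t :: real assume t: "t \<in> {0..1}"
    have "tp t \<in> D" using t by (auto simp: tp_def D_def)
    moreover have "\<sigma> t \<in> D" using t by (auto simp: \<sigma>_def D_def)
    ultimately show "closed_segment (tp t) (\<sigma> t) \<subseteq> D"
      using cvx by (simp add: closed_segment_subset)
  qed
  define q where "q = (\<lambda>h::real\<Rightarrow>'a. h 0 = x \<and> h 1 = x)"
  have \<Psi>01: "\<Psi> (0,1) = x" "\<Psi> (1,1) = x" by (auto simp: \<Psi>_def H1 \<alpha>)
  have P01: "P (0,1) = x" "P (1,1) = x" by (auto simp: P_def H1)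
  have Pc: "continuous_map (top_of_set D) X P"
  proof -
    have "continuous_map (top_of_set D) (prod_topology (top_of_set {0..1}) X) (\<lambda>y. (max 0 (snd y), x))"
      by (auto simp: D_def continuous_map_in_subtopology xX
            intro!: continuous_map_pairedI continuous_intros)
    then show ?thesis using continuous_map_compose[OF _ H] by (simp add: o_def P_def)
  qed
  have h1: "homotopic_with q (top_of_set {0..1}) X (\<Psi> \<circ> tp) (\<Psi> \<circ> \<sigma>)"
    using homotopic_with_compose_continuous_map_left[OF hp[unfolded homotopic_paths_def] \<Psi>c]
    by (simp add: q_def tp_def pathstart_def pathfinish_def \<Psi>01)
  have h2: "homotopic_with q (top_of_set {0..1}) X (P \<circ> tp) (P \<circ> \<sigma>)"
    using homotopic_with_compose_continuous_map_left[OF hp[unfolded homotopic_paths_def] Pc]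
    by (simp add: q_def tp_def pathstart_def pathfinish_def P01)
  have bd: "\<Psi> y = P y" if "y \<in> D" "fst y = 0 \<or> fst y = 1 \<or> snd y = -1" for y
    using that Ke[of "- snd y"] K1
    by (cases y) (auto simp: D_def \<Psi>_def P_def \<alpha> max_def)
  have \<sigma>bd: "fst (\<sigma> s) = 0 \<or> fst (\<sigma> s) = 1 \<or> snd (\<sigma> s) = -1" "\<sigma> s \<in> D" if "s \<in> {0..1}" for s
    using that by (auto simp: \<sigma>_def D_def abs_if min_def max_def)
  have h3: "homotopic_with q (top_of_set {0..1}) X (\<Psi> \<circ> \<sigma>) (P \<circ> \<sigma>)"
  proof (rule homotopic_with_equal)
    show "q (\<Psi> \<circ> \<sigma>)" "q (P \<circ> \<sigma>)"
      using \<sigma>bd[of 0] \<sigma>bd[of 1] bd \<Psi>01 P01 by (auto simp: q_def \<sigma>_def)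
    show "continuous_map (top_of_set {0..1}) X (\<Psi> \<circ> \<sigma>)"
      using homotopic_with_imp_continuous_maps h1 by blast
    show "(\<Psi> \<circ> \<sigma>) s = (P \<circ> \<sigma>) s" if "s \<in> topspace (top_of_set {0..1})" for s
      using that \<sigma>bd bd by auto
  qed
  have e1: "\<Psi> \<circ> tp = \<alpha>" by (auto simp: \<Psi>_def tp_def H1)
  have e2: "P \<circ> tp = (\<lambda>t. x)" by (auto simp: P_def tp_def H1)
  show ?thesis
    unfolding trivial_loop_def
    using homotopic_with_trans[OF homotopic_with_trans[OF h1 h3] homotopic_with_symD[OF h2]]
    by (simp add: e1 e2 q_def)
qed

lemma nontriv_preserve:
  assumes f: "continuous_map X Y f" and g: "continuous_map Y X g"
    and hom: "homotopic_with (\<lambda>_. True) X X (g \<circ> f) id"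
    and l: "loop_at X x \<alpha>" and nt: "\<not> trivial_loop X x \<alpha>"
  shows "\<not> trivial_loop Y (f x) (f \<circ> \<alpha>)"
proof
  assume tr: "trivial_loop Y (f x) (f \<circ> \<alpha>)"
  have K: "homotopic_with (\<lambda>h. h 0 = g (f x) \<and> h 1 = g (f x)) (top_of_set {0..1}) X
      (g \<circ> (f \<circ> \<alpha>)) (g \<circ> (\<lambda>t. f x))"
    using homotopic_with_compose_continuous_map_left[OF tr[unfolded trivial_loop_def] g]
    by simp
  obtain H :: "real \<times> _ \<Rightarrow> _" where Hc: "continuous_map (prod_topology (top_of_set {0..1}) X) X H"
    and H0: "\<And>z. H(0,z) = g (f z)" and H1: "\<And>z. H(1,z) = z"
    using hom unfolding homotopic_with_def by auto
  have "trivial_loop X x \<alpha>"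
  proof (rule lemA[OF Hc H1])
    show "pathin X \<alpha>" "\<alpha> 0 = x" "\<alpha> 1 = x" using l by (auto simp: loop_at_def)
    show "homotopic_with (\<lambda>h. h 0 = H (0, x) \<and> h 1 = H (0, x)) (top_of_set {0..1}) X
       (\<lambda>s. H (0, \<alpha> s)) (\<lambda>s. H (0, x))"
      using K by (simp add: H0 o_def)
  qed
  with nt show False by simp
qed

lemma wild_pres:
  assumes f: "continuous_map X Y f" and g: "continuous_map Y X g"
    and hom: "homotopic_with (\<lambda>_. True) X X (g \<circ> f) id"
  shows "f ` wild_set X \<subseteq> wild_set Y"
proof
  fix y assume "y \<in> f ` wild_set X"
  then obtain x where x: "x \<in> wild_set X" and y: "y = f x" by auto
  have xX: "x \<in> topspace X" using x by (simp add: wild_set_def)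
  have "f x \<in> wild_set Y"
    unfolding wild_set_def
  proof (intro CollectI conjI allI impI)
    show "f x \<in> topspace Y" using f xX by (auto simp: continuous_map_def Pi_iff)
    fix U assume U: "openin Y U \<and> f x \<in> U"
    define V where "V = {z \<in> topspace X. f z \<in> U}"
    have V: "openin X V \<and> x \<in> V" using U f xX by (auto simp: V_def continuous_map_def)
    then obtain \<alpha> where a: "loop_at X x \<alpha>" "\<alpha> ` {0..1} \<subseteq> V" "\<not> trivial_loop X x \<alpha>"
      using x unfolding wild_set_def by blast
    show "\<exists>g. loop_at Y (f x) g \<and> g ` {0..1} \<subseteq> U \<and> \<not> trivial_loop Y (f x) g"
    proof (intro exI conjI)
      show "loop_at Y (f x) (f \<circ> \<alpha>)" using a(1) f by (auto simp: loop_at_def pathin_compose)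
      show "(f \<circ> \<alpha>) ` {0..1} \<subseteq> U" using a(2) by (auto simp: V_def)
      show "\<not> trivial_loop Y (f x) (f \<circ> \<alpha>)" by (rule nontriv_preserve[OF f g hom a(1) a(3)])
    qed
  qed
  then show "y \<in> wild_set Y" using y by simp
qed

lemma awild_pres:
  assumes f: "continuous_map X Y f" and g: "continuous_map Y X g"
    and hom: "homotopic_with (\<lambda>_. True) X X (g \<circ> f) id"
  shows "f ` awild_set X \<subseteq> awild_set Y"
proof
  fix y assume "y \<in> f ` awild_set X"
  then obtain x where x: "x \<in> awild_set X" and y: "y = f x" by auto
  have xX: "x \<in> topspace X" using x by (simp add: awild_set_def)
  obtain \<alpha> :: "nat \<Rightarrow> real \<Rightarrow> _" where a: "\<And>n. loop_at X x (\<alpha> n) \<and> \<not> trivial_loop X x (\<alpha> n)"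
    and nul: "\<And>U. openin X U \<and> x \<in> U \<Longrightarrow> (\<forall>\<^sub>F n in sequentially. \<alpha> n ` {0..1} \<subseteq> U)"
    using x unfolding awild_set_def by blast
  have "f x \<in> awild_set Y"
    unfolding awild_set_def
  proof (intro CollectI conjI exI)
    show "f x \<in> topspace Y" using f xX by (auto simp: continuous_map_def Pi_iff)
    show "\<forall>n. loop_at Y (f x) (f \<circ> \<alpha> n) \<and> \<not> trivial_loop Y (f x) (f \<circ> \<alpha> n)"
    proof
      fix n
      show "loop_at Y (f x) (f \<circ> \<alpha> n) \<and> \<not> trivial_loop Y (f x) (f \<circ> \<alpha> n)"
        using a[of n] f nontriv_preserve[OF f g hom, of x "\<alpha> n"]
        by (auto simp: loop_at_def intro: pathin_compose)
    qed
    show "\<forall>U. openin Y U \<and> f x \<in> U \<longrightarrow> (\<forall>\<^sub>F n in sequentially. (f \<circ> \<alpha> n) ` {0..1} \<subseteq> U)"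
    proof (intro allI impI)
      fix U assume U: "openin Y U \<and> f x \<in> U"
      define V where "V = {z \<in> topspace X. f z \<in> U}"
      have V: "openin X V \<and> x \<in> V" using U f xX by (auto simp: V_def continuous_map_def)
      show "\<forall>\<^sub>F n in sequentially. (f \<circ> \<alpha> n) ` {0..1} \<subseteq> U"
        using nul[OF V] by eventually_elim (auto simp: V_def)
    qed
  qed
  then show "y \<in> awild_set Y" using y by simp
qed

lemma Ht_hom:
  fixes t :: real
  assumes Hc: "continuous_map (prod_topology (top_of_set {0..1}) X) X H"
    and H1: "\<And>z. H(1,z) = z" and t: "t \<in> {0..1}"
  shows "homotopic_with (\<lambda>_. True) X X (id \<circ> (\<lambda>z. H(t,z))) id"
  unfolding homotopic_with_def
proof (intro exI conjI allI ballI)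
  let ?k = "\<lambda>y::real \<times> _. H(t + fst y * (1 - t), snd y)"
  have "continuous_map (prod_topology (top_of_set {0..1}) X) (prod_topology (top_of_set {0..1}) X)
      (\<lambda>y. (t + fst y * (1 - t), snd y))"
  proof (intro continuous_map_pairedI)
    show "continuous_map (prod_topology (top_of_set {0..1}) X) X snd" by (rule continuous_map_snd)
    have "continuous_map (prod_topology (top_of_set {0..1}) X) euclideanreal (\<lambda>y. t + fst y * (1 - t))"
      by (intro continuous_intros continuous_map_from_subtopology continuous_map_fst)
         (simp add: continuous_map_fst continuous_map_subtopology_fst prod_topology_subtopology(1))
    moreover have "t + fst y * (1 - t) \<in> {0..1}" if "y \<in> topspace (prod_topology (top_of_set {0..1}) X)" for y
    proof -
      have "fst y \<in> {0..1}" using that by auto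
      then show ?thesis using t
        by (auto intro!: add_nonneg_nonneg mult_nonneg_nonneg)
           (smt (verit, ccfv_SIG) mult_left_le_one_le)
    qed
    ultimately show "continuous_map (prod_topology (top_of_set {0..1}) X) (top_of_set {0..1})
        (\<lambda>y. t + fst y * (1 - t))"
      by (auto simp: continuous_map_in_subtopology)
  qed
  then show "continuous_map (prod_topology (top_of_set {0..1}) X) X ?k"
    using continuous_map_compose[OF _ Hc] by (simp add: o_def)
qed (auto simp: H1)


lemma restrict_hom:
  assumes hom: "homotopic_with (\<lambda>_. True) X X (g \<circ> f) id"
    and pXX: "\<And>h. continuous_map X X h \<Longrightarrow> homotopic_with (\<lambda>_. True) X X (id \<circ> h) id \<Longrightarrow> h ` A \<subseteq> A"
  shows "homotopic_with (\<lambda>_. True) (subtopology X A) (subtopology X A) (g \<circ> f) id"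
proof -
  obtain H :: "real \<times> _ \<Rightarrow> _" where Hc: "continuous_map (prod_topology (top_of_set {0..1}) X) X H"
    and H0: "\<And>z. H(0,z) = g (f z)" and H1: "\<And>z. H(1,z) = z"
    using hom unfolding homotopic_with_def by auto
  have Hin: "H (t,z) \<in> A" if "t \<in> {0..1}" "z \<in> A" for t z
  proof -
    have "continuous_map X X (\<lambda>z. H(t,z))"
      using continuous_map_o_Pair[OF Hc, of t] that by (simp add: o_def)
    then have "(\<lambda>z. H(t,z)) ` A \<subseteq> A" using pXX Ht_hom[OF Hc H1 that(1)] by blast
    then show ?thesis using that by auto
  qed
  show ?thesis
    unfolding homotopic_with_def
  proof (intro exI conjI allI ballI)
    show "continuous_map (prod_topology (top_of_set {0..1}) (subtopology X A)) (subtopology X A) H"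
      unfolding prod_topology_subtopology(2)
      by (auto simp: continuous_map_in_subtopology Hin intro!: continuous_map_from_subtopology Hc)
  qed (auto simp: H0 H1)
qed

lemma restrict_he:
  fixes X :: "'a topology" and Y :: "'b topology"
  assumes he: "X homotopy_equivalent_space Y"
    and pXY: "\<And>f g. continuous_map X Y f \<Longrightarrow> continuous_map Y X g \<Longrightarrow> homotopic_with (\<lambda>_. True) X X (g \<circ> f) id \<Longrightarrow> f ` A \<subseteq> B"
    and pYX: "\<And>f g. continuous_map Y X f \<Longrightarrow> continuous_map X Y g \<Longrightarrow> homotopic_with (\<lambda>_. True) Y Y (g \<circ> f) id \<Longrightarrow> f ` B \<subseteq> A"
    and pXX: "\<And>f g. continuous_map X X f \<Longrightarrow> continuous_map X X g \<Longrightarrow> homotopic_with (\<lambda>_. True) X X (g \<circ> f) id \<Longrightarrow> f ` A \<subseteq> A"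
    and pYY: "\<And>f g. continuous_map Y Y f \<Longrightarrow> continuous_map Y Y g \<Longrightarrow> homotopic_with (\<lambda>_. True) Y Y (g \<circ> f) id \<Longrightarrow> f ` B \<subseteq> B"
  shows "subtopology X A homotopy_equivalent_space subtopology Y B"
proof -
  obtain f g where f: "continuous_map X Y f" and g: "continuous_map Y X g"
    and gf: "homotopic_with (\<lambda>x. True) X X (g \<circ> f) id"
    and fg: "homotopic_with (\<lambda>x. True) Y Y (f \<circ> g) id"
    using he unfolding homotopy_equivalent_space_def by blast
  show ?thesis
    unfolding homotopy_equivalent_space_def
  proof (intro exI conjI)
    show "continuous_map (subtopology X A) (subtopology Y B) f"
      using pXY[OF f g gf] by (auto simp: continuous_map_in_subtopology intro!: continuous_map_from_subtopology f)
    show "continuous_map (subtopology Y B) (subtopology X A) g"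
      using pYX[OF g f fg] by (auto simp: continuous_map_in_subtopology intro!: continuous_map_from_subtopology g)
    show "homotopic_with (\<lambda>x. True) (subtopology X A) (subtopology X A) (g \<circ> f) id"
      by (rule restrict_hom[OF gf]) (metis pXX continuous_map_id)
    show "homotopic_with (\<lambda>x. True) (subtopology Y B) (subtopology Y B) (f \<circ> g) id"
      by (rule restrict_hom[OF fg]) (metis pYY continuous_map_id)
  qed
qed

theorem mainTheorem6:
  fixes X :: "'a topology" and Y :: "'b topology"
  assumes "X homotopy_equivalent_space Y"
  shows "subtopology X (wild_set X) homotopy_equivalent_space subtopology Y (wild_set Y)
       \<and> subtopology X (awild_set X) homotopy_equivalent_space subtopology Y (awild_set Y)"
proof
  show "subtopology X (wild_set X) homotopy_equivalent_space subtopology Y (wild_set Y)"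
    by (rule restrict_he[OF assms]; erule (2) wild_pres)
  show "subtopology X (awild_set X) homotopy_equivalent_space subtopology Y (awild_set Y)"
    by (rule restrict_he[OF assms]; erule (2) awild_pres)
qed

end
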